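(* For every $k\in\mathbb Z$, the series $\Psi^\pm_k:=R_\pm^k\Psi_0^\pm$ are given by \[ \Psi_k^+(x)=\gamma\sum_{j\ge0}x^{j+k}h_j(\beta^{-1}{\bf s})\rho_{j+k-1},\qquad \Psi_k^-(x)=\sum_{j\ge0}x^{j+k}h_j(-\beta^{-1}{\bf s})\rho^{-1}_{-j-k}. \]
   Context: Let $G(z)=1+\sum_{i\ge1}g_iz^i$ be a formal power series, $\beta,\gamma$ formal parameters, ${\bf s}=(s_1,s_2,\dots)$. $h_j({\bf s})$ are the complete symmetric functions in the variables $s_i$ via $\sum_jh_j({\bf s})z^j=\exp(\sum_is_iz^i)$, and $\pm\beta^{-1}{\bf s}=(\pm\beta^{-1}s_1,\pm\beta^{-1}s_2,\dots)$. With $r_\lambda=\prod_{(i,j)\in\lambda}G((j-i)\beta)$ (boxes $(i,j)$, $i$ = row, $j$ = column) and Schur functions written in ${\bf t}$ with $p_i=it_i$, let $\tau({\bf t})=\sum_\lambda\gamma^{|\lambda|}r_\lambda s_\lambda({\bf t})s_\lambda(\beta^{-1}{\bf s})$ and $\Psi_0^\pm(x)=\tau(\pm[x])$, $[x]=(x,x^2/2,\dots)$. Set $\rho_0=1$, $\rho_j=\gamma^j\prod_{i=1}^jG(i\beta)$ and $\rho_{-j}=\gamma^{-j}\prod_{i=0}^{j-1}G(-i\beta)^{-1}$ for $j\ge1$. $D=x\,d/dx$, and $R_\pm=\gamma xG(\pm\beta D)$ acts on formal Laurent series in $x$ (coefficients in $\mathbb Q[g_1,g_2,\dots][{\bf s}][\gamma,\gamma^{-1}]((\beta))$)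 by $R_\pm(x^j)=\gamma G(\pm\beta j)x^{j+1}$; it is invertible since each $G(\pm\beta j)$ is invertible, and $R_\pm^k$ for $k<0$ means the inverse power. *)

theory Defs
  imports "HOL-Computational_Algebra.Formal_Laurent_Series" "HOL-Combinatorics.Permutations"
begin

(* Complete symmetric functions: sum_j h_j(t) z^j = exp(sum_{i>=1} t_i z^i).
   Sequences t = (t_1, t_2, ...) are functions nat => 'b; the value at 0 is ignored. *)
definition hcs :: "(nat \<Rightarrow> 'b::field_char_0) \<Rightarrow> nat \<Rightarrow> 'b" where
  "hcs t j = (fps_exp 1 oo Abs_fps (\<lambda>i. if i = 0 then 0 else t i)) $ j"

definition is_partition :: "nat list \<Rightarrow> bool" where
  "is_partition lam \<longleftrightarrow> sorted_wrt (\<ge>) lam \<and> (\<forall>x\<in>set lam. 0 < x)"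

definition ldet :: "nat \<Rightarrow> (nat \<Rightarrow> nat \<Rightarrow> 'b::comm_ring_1) \<Rightarrow> 'b" where
  "ldet n M = (\<Sum>p | p permutes {..<n}. of_int (sign p) * (\<Prod>i<n. M i (p i)))"

definition hcs_int :: "(nat \<Rightarrow> 'b::field_char_0) \<Rightarrow> int \<Rightarrow> 'b" where
  "hcs_int t m = (if m < 0 then 0 else hcs t (nat m))"

(* Schur function via Jacobi--Trudi: s_lam(t) = det (h_{lam_i - i + j}(t)) *)
definition schur :: "nat list \<Rightarrow> (nat \<Rightarrow> 'b::field_char_0) \<Rightarrow> 'b" where
  "schur lam t = ldet (length lam)
     (\<lambda>i j. hcs_int t (int (lam ! i) - int i + int j))"

(* content product r_lam = prod over boxes (i,j) of G((j - i) beta) *)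
definition r_lam :: "('a::field_char_0 \<Rightarrow> 'a) \<Rightarrow> 'a \<Rightarrow> nat list \<Rightarrow> 'a" where
  "r_lam G beta lam = (\<Prod>i<length lam. \<Prod>j<lam ! i. G (of_int (int j - int i) * beta))"

(* formal (coefficientwise, finitely supported) sum of Laurent series over an index set *)
definition fls_formal_sum :: "('i \<Rightarrow> 'a::comm_monoid_add fls) \<Rightarrow> 'i set \<Rightarrow> 'a fls" where
  "fls_formal_sum F A = Abs_fls (\<lambda>n. \<Sum>i\<in>{i\<in>A. fls_nth (F i) n \<noteq> 0}. fls_nth (F i) n)"

(* the Miwa point sigma*[x] = (sigma x, sigma x^2/2, ...) as Laurent series in x *)
definition miwa :: "'a::field_char_0 \<Rightarrow> nat \<Rightarrow> 'a fls" where
  "miwa sigma i = fls_const sigma * fls_X ^ i / of_nat i"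

(* Psi_0^{sigma}(x) = tau(sigma [x]),
   tau(t) = sum_lam gamma^|lam| r_lam s_lam(t) s_lam(beta^{-1} s) *)
definition Psi0 :: "('a::field_char_0 \<Rightarrow> 'a) \<Rightarrow> 'a \<Rightarrow> 'a \<Rightarrow> (nat \<Rightarrow> 'a) \<Rightarrow> 'a \<Rightarrow> 'a fls" where
  "Psi0 G beta gamma s sigma = fls_formal_sum
     (\<lambda>lam. fls_const (gamma ^ sum_list lam * r_lam G beta lam * schur lam (\<lambda>i. s i / beta))
            * schur lam (miwa sigma))
     {lam. is_partition lam}"

(* R_sigma = gamma x G(sigma beta D):  R(x^j) = gamma G(sigma beta j) x^(j+1) *)
definition Rop :: "('a::field_char_0 \<Rightarrow> 'a) \<Rightarrow> 'a \<Rightarrow> 'a \<Rightarrow> 'a \<Rightarrow> 'a fls \<Rightarrow> 'a fls" where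
  "Rop G beta gamma sigma f =
     Abs_fls (\<lambda>n. gamma * G (sigma * beta * of_int (n - 1)) * fls_nth f (n - 1))"

definition Rinv :: "('a::field_char_0 \<Rightarrow> 'a) \<Rightarrow> 'a \<Rightarrow> 'a \<Rightarrow> 'a \<Rightarrow> 'a fls \<Rightarrow> 'a fls" where
  "Rinv G beta gamma sigma f =
     Abs_fls (\<lambda>n. fls_nth f (n + 1) / (gamma * G (sigma * beta * of_int n)))"

definition Rpow :: "('a::field_char_0 \<Rightarrow> 'a) \<Rightarrow> 'a \<Rightarrow> 'a \<Rightarrow> 'a \<Rightarrow> int \<Rightarrow> 'a fls \<Rightarrow> 'a fls" where
  "Rpow G beta gamma sigma k =
     (if 0 \<le> k then Rop G beta gamma sigma ^^ nat k else Rinv G beta gamma sigma ^^ nat (- k))"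

definition rho :: "('a::field_char_0 \<Rightarrow> 'a) \<Rightarrow> 'a \<Rightarrow> 'a \<Rightarrow> int \<Rightarrow> 'a" where
  "rho G beta gamma j =
     (if 0 \<le> j then gamma ^ nat j * (\<Prod>i=1..nat j. G (of_nat i * beta))
      else inverse (gamma ^ nat (- j)) * (\<Prod>i<nat (- j). inverse (G (- (of_nat i * beta)))))"

end

theory Submission
  imports Defs "Jordan_Normal_Form.Determinant"
begin

definition Lf :: "(nat \<Rightarrow> 'b::field_char_0) \<Rightarrow> 'b fps" where
  "Lf t = Abs_fps (\<lambda>i. if i = 0 then 0 else t i)"
definition Hf :: "(nat \<Rightarrow> 'b::field_char_0) \<Rightarrow> 'b fps" where
  "Hf t = fps_exp 1 oo Lf t"

lemma hcs_Hf: "hcs t j = Hf t $ j"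
  by (simp add: hcs_def Hf_def Lf_def)

lemma Lf0[simp]: "Lf t $ 0 = 0" by (simp add: Lf_def)

lemma Hf0[simp]: "Hf t $ 0 = 1" by (simp add: Hf_def)

lemma Hf_deriv: "fps_deriv (Hf t) = Hf t * fps_deriv (Lf t)"
  unfolding Hf_def by (simp add: fps_compose_deriv)

lemma Lf_neg: "Lf (\<lambda>i. - t i) = - Lf t"
  by (simp add: Lf_def fps_eq_iff)

lemma Hf_neg: "Hf t * Hf (\<lambda>i. - t i) = 1"
proof -
  let ?P = "Hf t * Hf (\<lambda>i. - t i)"
  have "fps_deriv ?P = 0"
    by (simp add: Hf_deriv Lf_neg algebra_simps)
  hence "?P = fps_const (?P $ 0)" by (rule fps_deriv_eq_0_iff[THEN iffD1])
  thus ?thesis by simp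
qed

lemma Hf_rec: "of_nat (n+1) * Hf t $ (n+1) = (\<Sum>i=0..n. Hf t $ i * (of_nat (n - i + 1) * t (n - i + 1)))"
proof -
  have "fps_deriv (Hf t) $ n = (Hf t * fps_deriv (Lf t)) $ n" by (simp only: Hf_deriv)
  thus ?thesis by (simp add: fps_mult_nth Lf_def)
qed

lemma miwa_mul: "m > 0 \<Longrightarrow> of_nat m * miwa c m = fls_const c * fls_X ^ m"
  by (simp add: miwa_def)

lemma Hf_miwa1: "Hf (miwa (1::'a::field_char_0)) $ j = fls_X ^ j"
proof -
  have "\<forall>i\<le>n. Hf (miwa (1::'a)) $ i = fls_X ^ i" for n
  proof (induction n)
    case 0 then show ?case by simp
  next
    case (Suc n)
    have "of_nat (n+1) * Hf (miwa (1::'a)) $ (n+1)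
        = (\<Sum>i=0..n. Hf (miwa 1) $ i * (of_nat (n - i + 1) * miwa 1 (n - i + 1)))"
      by (rule Hf_rec)
    also have "\<dots> = (\<Sum>i=0..n. (fls_X::'a fls) ^ (n+1))"
    proof (rule sum.cong[OF refl])
      fix i assume i: "i \<in> {0..n}"
      have "of_nat (n - i + 1) * miwa (1::'a) (n - i + 1) = fls_X ^ (n - i + 1)"
        using miwa_mul[of "n-i+1" 1] by simp
      moreover have "Hf (miwa (1::'a)) $ i = fls_X ^ i" using Suc i by auto
      ultimately show "Hf (miwa 1) $ i * (of_nat (n - i + 1) * miwa 1 (n - i + 1)) = (fls_X::'a fls) ^ (n+1)"
        using i by (simp add: power_add[symmetric])
    qed
    also have "\<dots> = of_nat (n+1) * fls_X ^ (n+1)" by simp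
    finally have "Hf (miwa (1::'a)) $ (n+1) = fls_X ^ (n+1)"
      by (metis mult_cancel_left of_nat_eq_0_iff add_eq_0_iff_both_eq_0 one_neq_zero)
    then show ?case using Suc by (auto simp: le_Suc_eq)
  qed
  thus ?thesis by auto
qed

lemma miwa_neg: "miwa (-1::'a::field_char_0) = (\<lambda>i. - miwa 1 i)"
  by (rule ext) (simp add: miwa_def)

lemma Hf_miwa_m1: "Hf (miwa (-1::'a::field_char_0)) $ j =
   (if j = 0 then 1 else if j = 1 then - fls_X else 0)"
proof -
  define Q :: "'a fls fps" where "Q = Hf (miwa 1)"
  define E :: "'a fls fps" where "E = 1 - fps_const fls_X * fps_X"
  have QE: "Q * E = 1"
  proof (rule fps_ext)
    fix n
    show "(Q * E) $ n = 1 $ n"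
    proof (cases n)
      case 0 then show ?thesis by (simp add: Q_def E_def)
    next
      case (Suc m)
      have "(Q * E) $ n = Q $ n - fls_X * (fps_X * Q) $ n"
        by (simp add: E_def algebra_simps)
      also have "\<dots> = 0" using Suc by (simp add: Q_def Hf_miwa1 power_Suc)
      finally show ?thesis using Suc by simp
    qed
  qed
  have "Hf (miwa (-1::'a)) = Hf (miwa (-1)) * (Q * E)" by (simp add: QE)
  also have "\<dots> = (Q * Hf (\<lambda>i. - miwa 1 i)) * E" by (simp add: miwa_neg ac_simps)
  also have "\<dots> = E" unfolding Q_def Hf_neg by simp
  finally show ?thesis by (simp add: E_def)
qed

lemma ldet_det: "ldet n M = det (mat n n (\<lambda>(i,j). M i j))"
  unfolding ldet_def det_def
  by (simp add: atLeast0LessThan)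

lemma hint_plus: "hcs_int (miwa (1::'a::field_char_0)) m = (if m < 0 then 0 else fls_X ^ nat m)"
  by (simp add: hcs_int_def hcs_Hf Hf_miwa1)

lemma hint_minus: "hcs_int (miwa (-1::'a::field_char_0)) m =
   (if m = 0 then 1 else if m = 1 then - fls_X else 0)"
  by (auto simp add: hcs_int_def hcs_Hf Hf_miwa_m1 nat_eq_iff)

lemma part_nth_pos: "is_partition lam \<Longrightarrow> i < length lam \<Longrightarrow> lam ! i > 0"
  unfolding is_partition_def by auto

lemma part_mono: "is_partition lam \<Longrightarrow> i < j \<Longrightarrow> j < length lam \<Longrightarrow> lam ! j \<le> lam ! i"
  unfolding is_partition_def by (auto simp: sorted_wrt_iff_nth_less)

lemma schur_nil[simp]: "schur [] t = 1"
  by (simp add: schur_def ldet_def)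

lemma hcs0[simp]: "hcs t 0 = 1"
  by (simp add: hcs_Hf)

lemma schur_single[simp]: "schur [m] t = hcs t m"
  by (simp add: schur_def ldet_def hcs_int_def lessThan_Suc)

lemma schur_plus:
  assumes "is_partition lam" "length lam \<ge> 2"
  shows "schur lam (miwa (1::'a::field_char_0)) = 0"
proof -
  let ?n = "length lam"
  let ?M = "\<lambda>i j. hcs_int (miwa (1::'a)) (int (lam ! i) - int i + int j)"
  define A where "A = mat ?n ?n (\<lambda>(i,j). ?M i j)"
  have A: "A \<in> carrier_mat ?n ?n" by (simp add: A_def)
  have ne: "lam \<noteq> []" using assms(2) by auto
  have l1: "lam ! 1 > 0" using part_nth_pos[OF assms(1), of 1] assms(2) by simp
  have l01: "lam ! 1 \<le> lam ! 0" using part_mono[OF assms(1), of 0 1] assms(2) by simp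
  define c :: "'a fls" where "c = fls_X ^ (lam ! 0 + 1 - lam ! 1)"
  have c0: "c \<noteq> 0" by (simp add: c_def)
  have "det (multrow 1 c A) = 0"
  proof (rule det_identical_rows[of _ ?n 0 1])
    show "multrow 1 c A \<in> carrier_mat ?n ?n" using A by simp
    show "row (multrow 1 c A) 0 = row (multrow 1 c A) 1"
    proof (rule eq_vecI)
      fix j assume "j < dim_vec (row (multrow 1 c A) 1)"
      hence j: "j < ?n" using A by simp
      have e: "nat (int (lam ! 1) - 1 + int j) = lam ! 1 - 1 + j" using l1 by simp
      have e': "nat (int (lam ! Suc 0) - 1 + int j) = lam ! Suc 0 + j - Suc 0" using l1 by simp
      have cc: "c * fls_X ^ (lam ! 1 - 1 + j) = (fls_X::'a fls) ^ (lam ! 0 + j)"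
        unfolding c_def power_add[symmetric] using l1 l01 by (simp add: algebra_simps)
      have r0: "multrow 1 c A $$ (0,j) = (fls_X::'a fls) ^ (lam ! 0 + j)"
        using j assms(2) ne by (simp add: A_def hint_plus nat_add_distrib)
      have r1: "multrow 1 c A $$ (1,j) = c * (fls_X::'a fls) ^ (lam ! 1 - 1 + j)"
        using j assms(2) l1 ne by (simp add: A_def hint_plus e')
      have i0: "row (multrow 1 c A) 0 $ j = multrow 1 c A $$ (0,j)"
        by (rule index_row) (use j ne A in auto)
      have i1: "row (multrow 1 c A) 1 $ j = multrow 1 c A $$ (1,j)"
        by (rule index_row) (use j assms(2) A in auto)
      show "row (multrow 1 c A) 0 $ j = row (multrow 1 c A) 1 $ j"
        unfolding i0 i1 r0 r1 cc ..
    qed (use A in simp)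
  qed (use assms(2) in auto)
  hence "c * det A = 0" using det_multrow[OF _ A, of 1 c] assms(2) by simp
  hence "det A = 0" using c0 by simp
  thus ?thesis by (simp add: schur_def ldet_det A_def)
qed

lemma schur_col:
  fixes t :: "nat \<Rightarrow> 'b::field_char_0"
  shows "schur (replicate n 1) t = (-1)^n * hcs (\<lambda>i. - t i) n"
proof -
  define N where "N = Suc n"
  define A where "A = mat N N (\<lambda>(i,j). hcs_int t (int i - int j))"
  define x where "x = vec N (\<lambda>j. hcs (\<lambda>i. - t i) j)"
  have A: "A \<in> carrier_mat N N" by (simp add: A_def)
  have x: "x \<in> carrier_vec N" by (simp add: x_def)
  have Ax: "A *\<^sub>v x = unit_vec N 0"
  proof (rule eq_vecI)
    fix i assume "i < dim_vec (unit_vec N 0 :: 'b vec)"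
    hence i: "i < N" by simp
    have "(A *\<^sub>v x) $ i = (\<Sum>j\<in>{0..<N}. hcs_int t (int i - int j) * hcs (\<lambda>i. - t i) j)"
      using i by (simp add: A_def x_def mult_mat_vec_def scalar_prod_def)
    also have "\<dots> = (\<Sum>j\<in>{0..i}. hcs_int t (int i - int j) * hcs (\<lambda>i. - t i) j)"
      by (rule sum.mono_neutral_right) (use i in \<open>auto simp: hcs_int_def\<close>)
    also have "\<dots> = (\<Sum>j\<in>{0..i}. Hf (\<lambda>i. - t i) $ j * Hf t $ (i - j))"
      by (rule sum.cong) (auto simp: hcs_int_def hcs_Hf nat_diff_distrib)
    also have "\<dots> = (Hf (\<lambda>i. - t i) * Hf t) $ i" by (simp add: fps_mult_nth)
    also have "\<dots> = (if i = 0 then 1 else 0)" by (simp add: Hf_neg mult.commute)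
    finally show "(A *\<^sub>v x) $ i = unit_vec N 0 $ i" using i by simp
  qed (simp add: A_def)
  have detA: "det A = 1"
  proof -
    have "det A = prod_list (diag_mat A)"
      by (rule det_lower_triangular[OF _ A]) (auto simp: A_def hcs_int_def)
    also have "diag_mat A = replicate N 1"
      by (rule nth_equalityI) (auto simp: diag_mat_def A_def hcs_int_def)
    finally show ?thesis by simp
  qed
  define B where "B = replace_col A (unit_vec N 0) n"
  have B: "B \<in> carrier_mat N N" by (simp add: B_def replace_col_def A_def)
  have "det B = x $ n * det A"
    unfolding B_def Ax[symmetric] by (rule cramer_lemma_mat[OF A x]) (simp add: N_def)
  hence dB: "det B = hcs (\<lambda>i. - t i) n" by (simp add: detA x_def N_def)
  have "det B = (\<Sum>i<N. B $$ (i,n) * cofactor B i n)"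
    by (rule laplace_expansion_column[OF B]) (simp add: N_def)
  also have "\<dots> = (\<Sum>i\<in>{0}. B $$ (i,n) * cofactor B i n)"
    by (rule sum.mono_neutral_right) (auto simp: B_def replace_col_def A_def N_def)
  also have "\<dots> = cofactor B 0 n" by (simp add: B_def replace_col_def A_def N_def)
  also have "\<dots> = (-1)^n * det (mat_delete B 0 n)" by (simp add: cofactor_def)
  also have "mat_delete B 0 n = transpose_mat (mat n n (\<lambda>(i,j). hcs_int t (int (replicate n 1 ! i) - int i + int j)))"
    by (rule eq_matI) (auto simp: mat_delete_def B_def replace_col_def A_def N_def algebra_simps)
  also have "det \<dots> = schur (replicate n 1) t"
    by (subst det_transpose[of _ n]) (auto simp: schur_def ldet_det)
  finally have "hcs (\<lambda>i. - t i) n = (-1)^n * schur (replicate n 1) t" using dB by simp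
  hence "(-1)^n * hcs (\<lambda>i. - t i) n = ((-1)^n * (-1)^n) * schur (replicate n 1) t" by simp
  thus ?thesis by (simp add: power_mult_distrib[symmetric])
qed

lemma schur_minus_big:
  assumes "lam \<noteq> []" "lam ! 0 \<ge> 2"
  shows "schur lam (miwa (-1::'a::field_char_0)) = 0"
proof -
  have hp: "(\<Prod>i<length lam. hcs_int (miwa (-1::'a)) (int (lam ! i) - int i + int (p i))) = 0" for p
    by (rule prod_zero) (use assms in \<open>auto simp: hint_minus intro!: bexI[of _ 0]\<close>)
  show ?thesis unfolding schur_def ldet_def by (simp only: hp mult_zero_right sum.neutral_const)
qed

lemma schur_minus_col:
  "schur (replicate n 1) (miwa (-1::'a::field_char_0)) = (- fls_X) ^ n"
proof -
  define A where "A = mat n n (\<lambda>(i,j). hcs_int (miwa (-1::'a)) (int (replicate n 1 ! i) - int i + int j))"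
  have A: "A \<in> carrier_mat n n" by (simp add: A_def)
  have "det A = prod_list (diag_mat A)"
    by (rule det_lower_triangular[OF _ A]) (auto simp: A_def hint_minus)
  also have "diag_mat A = replicate n (- fls_X)"
    by (rule nth_equalityI) (auto simp: diag_mat_def A_def hint_minus)
  finally show ?thesis by (simp add: schur_def ldet_det A_def)
qed

lemma part_small:
  assumes "is_partition lam" "lam \<noteq> []" "lam ! 0 < 2"
  shows "lam = replicate (length lam) 1"
proof (rule nth_equalityI)
  fix i assume i: "i < length lam"
  have "lam ! i > 0" using part_nth_pos[OF assms(1) i] .
  moreover have "lam ! i \<le> lam ! 0"
    using part_mono[OF assms(1), of 0 i] i by (cases "i = 0") auto
  ultimately show "lam ! i = replicate (length lam) 1 ! i" using assms(3) i by simp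
qed simp

lemma part_replicate: "is_partition (replicate n 1)"
  by (simp add: is_partition_def sorted_wrt_iff_nth_less)

lemma part_single: "m > 0 \<Longrightarrow> is_partition [m]"
  by (simp add: is_partition_def)

lemma part_nil: "is_partition []"
  by (simp add: is_partition_def)

lemma sum_single_support:
  assumes "\<And>x. x \<in> A \<Longrightarrow> x \<noteq> a \<Longrightarrow> f x = 0"
  shows "(\<Sum>x\<in>{x\<in>A. f x \<noteq> 0}. f x) = (if a \<in> A then f a else 0)"
proof -
  have "{x\<in>A. f x \<noteq> 0} \<subseteq> {a}" using assms by auto
  hence "{x\<in>A. f x \<noteq> 0} = {} \<or> {x\<in>A. f x \<noteq> 0} = {a}" by auto
  thus ?thesis by auto
qed

lemma fls_nth_Abs_nonneg:
  assumes "\<And>n. n < 0 \<Longrightarrow> f n = 0"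
  shows "fls_nth (Abs_fls f) = f"
proof -
  have "\<forall>\<^sub>\<infinity> m::nat. f (- int m) = 0"
    unfolding MOST_nat using assms by (intro exI[of _ 0]) auto
  thus ?thesis by (simp add: Abs_fls_inverse)
qed

lemma neg_X_pow: "(- fls_X) ^ k = fls_const ((-1::'a::field_char_0) ^ k) * fls_X ^ k"
proof -
  have "(- fls_X::'a fls) = fls_const (-1) * fls_X" by (simp add: fls_eq_iff)
  thus ?thesis by (simp only: power_mult_distrib fls_const_power)
qed

lemma hcs_miwa1: "hcs (miwa (1::'a::field_char_0)) y = fls_X ^ y"
  by (simp add: hcs_Hf Hf_miwa1)

lemma r_lam_single: "r_lam G beta [m] = (\<Prod>j<m. G (of_int (int j) * beta))"
  by (simp add: r_lam_def)

lemma r_lam_col: "r_lam G beta (replicate m 1) = (\<Prod>i<m. G (of_int (- int i) * beta))"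
  by (simp add: r_lam_def)

lemma Psi0_plus_nth:
  fixes G :: "'a::field_char_0 \<Rightarrow> 'a"
  shows "fls_nth (Psi0 G beta gamma s 1) n =
    (if 0 \<le> n then gamma ^ nat n * (\<Prod>j<nat n. G (of_int (int j) * beta)) * hcs (\<lambda>i. s i / beta) (nat n) else 0)"
proof -
  define c where "c = (\<lambda>lam. gamma ^ sum_list lam * r_lam G beta lam * schur lam (\<lambda>i. s i / beta))"
  define F where "F = (\<lambda>lam. fls_const (c lam) * schur lam (miwa (1::'a)))"
  define a where "a = (if n = 0 then [] else [nat n])"
  have Psi: "Psi0 G beta gamma s 1 = fls_formal_sum F {lam. is_partition lam}"
    by (simp add: Psi0_def F_def c_def)
  have key: "(\<Sum>i\<in>{i\<in>{lam. is_partition lam}. fls_nth (F i) m \<noteq> 0}. fls_nth (F i) m) =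
    (if 0 \<le> m then gamma ^ nat m * (\<Prod>j<nat m. G (of_int (int j) * beta)) * hcs (\<lambda>i. s i / beta) (nat m) else 0)" for m
  proof -
    define b where "b = (if m = 0 then [] else [nat m])"
    have z: "fls_nth (F x) m = 0" if x: "x \<in> {lam. is_partition lam}" "x \<noteq> b" for x
    proof -
      consider "x = []" | y where "x = [y]" | "length x \<ge> 2"
        by (cases x; cases "tl x") auto
      thus ?thesis
      proof cases
        case 1 thus ?thesis using x by (auto simp: F_def b_def split: if_splits)
      next
        case 2
        have "y > 0" using x 2 part_nth_pos[of x 0] by auto
        thus ?thesis using x 2 by (auto simp: F_def b_def hcs_miwa1 split: if_splits)
      next
        case 3
        have "schur x (miwa (1::'a)) = 0" by (rule schur_plus) (use x 3 in auto)
        thus ?thesis by (simp add: F_def)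
      qed
    qed
    have "(\<Sum>i\<in>{i\<in>{lam. is_partition lam}. fls_nth (F i) m \<noteq> 0}. fls_nth (F i) m) =
       (if b \<in> {lam. is_partition lam} then fls_nth (F b) m else 0)"
      by (rule sum_single_support) (use z in auto)
    also have "\<dots> = (if 0 \<le> m then gamma ^ nat m * (\<Prod>j<nat m. G (of_int (int j) * beta)) * hcs (\<lambda>i. s i / beta) (nat m) else 0)"
    proof (cases "m = 0")
      case True thus ?thesis by (simp add: b_def F_def c_def part_nil r_lam_def)
    next
      case False
      show ?thesis
      proof (cases "m > 0")
        case True
        have "is_partition b" using True False by (simp add: b_def part_single)
        thus ?thesis using True False by (simp add: b_def F_def c_def r_lam_single hcs_miwa1)
      next
        case f2: False
        have "\<not> is_partition b" using False f2 by (simp add: b_def is_partition_def)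
        thus ?thesis using f2 False by simp
      qed
    qed
    finally show ?thesis .
  qed
  show ?thesis unfolding Psi fls_formal_sum_def key
    by (subst fls_nth_Abs_nonneg) auto
qed

lemma Psi0_minus_nth:
  fixes G :: "'a::field_char_0 \<Rightarrow> 'a"
  shows "fls_nth (Psi0 G beta gamma s (-1)) n =
    (if 0 \<le> n then gamma ^ nat n * (\<Prod>i<nat n. G (of_int (- int i) * beta)) * hcs (\<lambda>i. - (s i / beta)) (nat n) else 0)"
proof -
  define c where "c = (\<lambda>lam. gamma ^ sum_list lam * r_lam G beta lam * schur lam (\<lambda>i. s i / beta))"
  define F where "F = (\<lambda>lam. fls_const (c lam) * schur lam (miwa (-1::'a)))"
  have Psi: "Psi0 G beta gamma s (-1) = fls_formal_sum F {lam. is_partition lam}"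
    by (simp add: Psi0_def F_def c_def)
  have key: "(\<Sum>i\<in>{i\<in>{lam. is_partition lam}. fls_nth (F i) m \<noteq> 0}. fls_nth (F i) m) =
    (if 0 \<le> m then gamma ^ nat m * (\<Prod>i<nat m. G (of_int (- int i) * beta)) * hcs (\<lambda>i. - (s i / beta)) (nat m) else 0)" for m
  proof -
    define b where "b = replicate (nat m) (1::nat)"
    have colnth: "fls_nth (F (replicate k 1)) m = (if m = int k then c (replicate k 1) * (-1)^k else 0)" for k
    proof -
      have "schur (replicate k 1) (miwa (-1::'a)) = (-fls_X)^k" by (rule schur_minus_col)
      thus ?thesis unfolding F_def by (simp add: neg_X_pow)
    qed
    have z: "fls_nth (F x) m = 0" if x: "x \<in> {lam. is_partition lam}" "x \<noteq> b" for x
    proof (cases "x \<noteq> [] \<and> x ! 0 \<ge> 2")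
      case True
      have "schur x (miwa (-1::'a)) = 0" by (rule schur_minus_big) (use True in auto)
      thus ?thesis by (simp add: F_def)
    next
      case False
      have xr: "x = replicate (length x) 1"
      proof (cases "x = []")
        case False': False
        show ?thesis by (rule part_small) (use x False False' in auto)
      qed simp
      have "m \<noteq> int (length x)" using x(2) xr by (auto simp: b_def)
      thus ?thesis using colnth[of "length x"] xr by simp
    qed
    have "(\<Sum>i\<in>{i\<in>{lam. is_partition lam}. fls_nth (F i) m \<noteq> 0}. fls_nth (F i) m) =
       (if b \<in> {lam. is_partition lam} then fls_nth (F b) m else 0)"
      by (rule sum_single_support) (use z in auto)
    also have "\<dots> = fls_nth (F b) m" using part_replicate[of "nat m"] by (simp add: b_def)
    also have "\<dots> = (if 0 \<le> m then gamma ^ nat m * (\<Prod>i<nat m. G (of_int (- int i) * beta)) * hcs (\<lambda>i. - (s i / beta)) (nat m) else 0)"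
    proof (cases "0 \<le> m")
      case True
      have "fls_nth (F b) m = c b * (-1) ^ nat m" using colnth[of "nat m"] True by (simp add: b_def)
      also have "\<dots> = gamma ^ nat m * (\<Prod>i<nat m. G (of_int (- int i) * beta)) * hcs (\<lambda>i. - (s i / beta)) (nat m)"
      proof -
        have r: "r_lam G beta (replicate (nat m) 1) = (\<Prod>i<nat m. G (of_int (- int i) * beta))"
          by (rule r_lam_col)
        have sc: "schur (replicate (nat m) 1) (\<lambda>i. s i / beta) = (-1)^nat m * hcs (\<lambda>i. - (s i / beta)) (nat m)"
          by (rule schur_col)
        have sl: "sum_list (replicate (nat m) (1::nat)) = nat m" by (simp add: sum_list_replicate)
        have pp: "((-1::'a)^nat m) * (-1)^nat m = 1" by (simp flip: power_mult_distrib)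
        show ?thesis unfolding c_def b_def r sc sl
          by (simp add: ac_simps pp)
      qed
      finally show ?thesis using True by simp
    next
      case False
      thus ?thesis using colnth[of 0] by (simp add: b_def)
    qed
    finally show ?thesis .
  qed
  show ?thesis unfolding Psi fls_formal_sum_def key
    by (subst fls_nth_Abs_nonneg) auto
qed

lemma fls_nth_Abs_below:
  assumes "\<And>n. n < N \<Longrightarrow> g n = 0"
  shows "fls_nth (Abs_fls g) = g"
proof -
  have "\<forall>\<^sub>\<infinity> m::nat. g (- int m) = 0"
    unfolding MOST_nat using assms by (intro exI[of _ "nat (- N)"]) auto
  thus ?thesis by (simp add: Abs_fls_inverse)
qed

lemma Rop_nth: "fls_nth (Rop G beta gamma sigma f) n = gamma * G (sigma * beta * of_int (n - 1)) * fls_nth f (n - 1)"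
proof -
  obtain N where N: "\<forall>n<N. fls_nth f n = 0" by (rule fls_nth_vanishes_belowE)
  show ?thesis unfolding Rop_def
    by (subst fls_nth_Abs_below[of "N"]) (use N in auto)
qed

lemma Rinv_nth: "fls_nth (Rinv G beta gamma sigma f) n = fls_nth f (n + 1) / (gamma * G (sigma * beta * of_int n))"
proof -
  obtain N where N: "\<forall>n<N. fls_nth f n = 0" by (rule fls_nth_vanishes_belowE)
  show ?thesis unfolding Rinv_def
    by (subst fls_nth_Abs_below[of "N - 1"]) (use N in auto)
qed

lemma Rpow_gen:
  assumes w: "\<And>n. gamma * G (sigma * beta * of_int n) \<noteq> 0"
    and F0: "\<And>n. fls_nth f n = F 0 n"
    and rec: "\<And>k n. F (k + 1) n = gamma * G (sigma * beta * of_int (n - 1)) * F k (n - 1)"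
  shows "fls_nth (Rpow G beta gamma sigma k f) n = F k n"
proof (cases "0 \<le> k")
  case True
  have "\<forall>n. fls_nth ((Rop G beta gamma sigma ^^ m) f) n = F (int m) n" for m
  proof (induction m)
    case 0 thus ?case using F0 by simp
  next
    case (Suc m)
    show ?case
    proof
      fix n
      have "fls_nth ((Rop G beta gamma sigma ^^ Suc m) f) n = gamma * G (sigma * beta * of_int (n - 1)) * F (int m) (n - 1)"
        using Suc by (simp only: funpow.simps comp_apply Rop_nth)
      also have "\<dots> = F (int m + 1) n" by (rule rec[symmetric])
      also have "int m + 1 = int (Suc m)" by simp
      finally show "fls_nth ((Rop G beta gamma sigma ^^ Suc m) f) n = F (int (Suc m)) n" .
    qed
  qed
  thus ?thesis using True by (simp add: Rpow_def)
next
  case False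
  have "\<forall>n. fls_nth ((Rinv G beta gamma sigma ^^ m) f) n = F (- int m) n" for m
  proof (induction m)
    case 0 thus ?case using F0 by simp
  next
    case (Suc m)
    show ?case
    proof
      fix n
      have "F (- int m) (n + 1) = gamma * G (sigma * beta * of_int n) * F (- int (Suc m)) n"
        using rec[of "- int (Suc m)" "n + 1"] by simp
      thus "fls_nth ((Rinv G beta gamma sigma ^^ Suc m) f) n = F (- int (Suc m)) n"
        using Suc w[of n] by (simp add: Rinv_nth)
    qed
  qed
  thus ?thesis using False by (simp add: Rpow_def)
qed

lemma rho_rec:
  assumes G0: "G 0 = 1" and Gnz: "\<And>m::int. G (of_int m * beta) \<noteq> 0" and g: "gamma \<noteq> 0"
  shows "rho G beta gamma m = gamma * G (of_int m * beta) * rho G beta gamma (m - 1)"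
proof -
  consider "m \<ge> 1" | "m = 0" | "m \<le> -1" by linarith
  thus ?thesis
  proof cases
    case 1
    define k where "k = nat (m - 1)"
    have k: "m = int (Suc k)" using 1 by (simp add: k_def)
    have p1: "0 \<le> m" "nat m = Suc k" "0 \<le> m - 1" "nat (m - 1) = k" using k by auto
    have a: "rho G beta gamma m = gamma ^ Suc k * (\<Prod>i=1..Suc k. G (of_nat i * beta))"
      by (simp only: rho_def if_P[OF p1(1)] p1(2))
    have b: "rho G beta gamma (m - 1) = gamma ^ k * (\<Prod>i=1..k. G (of_nat i * beta))"
      by (simp only: rho_def if_P[OF p1(3)] p1(4))
    have c: "(\<Prod>i=1..Suc k. G (of_nat i * beta)) = G (of_nat (Suc k) * beta) * (\<Prod>i=1..k. G (of_nat i * beta))"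
      by (rule prod.nat_ivl_Suc') simp
    have d: "(of_int m :: 'a) = of_nat (Suc k)" using k by simp
    show ?thesis unfolding a b c d by (simp only: power_Suc mult_ac)
  next
    case 2
    have "rho G beta gamma (-1) = inverse gamma" by (simp add: rho_def G0)
    thus ?thesis using g 2 by (simp add: rho_def G0)
  next
    case 3
    define k where "k = nat (- m - 1)"
    have k: "m = - int (Suc k)" using 3 by (simp add: k_def)
    have p1: "\<not> 0 \<le> m" "nat (- m) = Suc k" "\<not> 0 \<le> m - 1" "nat (- (m - 1)) = Suc (Suc k)" using k by auto
    have a: "rho G beta gamma m = inverse (gamma ^ Suc k) * (\<Prod>i<Suc k. inverse (G (- (of_nat i * beta))))"
      by (simp only: rho_def if_not_P[OF p1(1)] p1(2))
    have b: "rho G beta gamma (m - 1) = inverse (gamma ^ Suc (Suc k)) * (\<Prod>i<Suc (Suc k). inverse (G (- (of_nat i * beta))))"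
      by (simp only: rho_def if_not_P[OF p1(3)] p1(4))
    have c: "(\<Prod>i<Suc (Suc k). inverse (G (- (of_nat i * beta)))) =
       inverse (G (- (of_nat (Suc k) * beta))) * (\<Prod>i<Suc k. inverse (G (- (of_nat i * beta))))"
      by (simp only: prod.lessThan_Suc mult_ac)
    have d0: "(of_int m :: 'a) = - of_nat (Suc k)" unfolding k by (simp only: of_int_minus of_int_of_nat_eq)
    have d: "(of_int m :: 'a) * beta = - (of_nat (Suc k) * beta)" unfolding d0 by (rule mult_minus_left)
    have nz: "G (- (of_nat (Suc k) * beta)) \<noteq> 0" using Gnz[of m] d by simp
    have e: "gamma * G (- (of_nat (Suc k) * beta)) * (inverse (gamma ^ Suc (Suc k)) * inverse (G (- (of_nat (Suc k) * beta))))
       = inverse (gamma ^ Suc k)"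
      using g nz by (simp add: field_simps)
    show ?thesis unfolding a b c d
      by (simp only: e[symmetric] mult_ac)
  qed
qed

lemma inverse_rec: "(c::'a::field) \<noteq> 0 \<Longrightarrow> a = c * b \<Longrightarrow> inverse b = c * inverse a"
  by (simp add: field_simps)

theorem proposition5p8:
  fixes G :: "'a::field_char_0 \<Rightarrow> 'a" and beta gamma :: 'a and s :: "nat \<Rightarrow> 'a" and k :: int
  assumes "G 0 = 1"
    and "\<And>m::int. G (of_int m * beta) \<noteq> 0"
    and "beta \<noteq> 0" and "gamma \<noteq> 0"
  shows "(\<forall>n::int. fls_nth (Rpow G beta gamma 1 k (Psi0 G beta gamma s 1)) n =
           (if k \<le> n then gamma * hcs (\<lambda>i. s i / beta) (nat (n - k)) * rho G beta gamma (n - 1)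
            else 0)) \<and>
         (\<forall>n::int. fls_nth (Rpow G beta gamma (-1) k (Psi0 G beta gamma s (-1))) n =
           (if k \<le> n then hcs (\<lambda>i. - (s i / beta)) (nat (n - k)) * inverse (rho G beta gamma (- n))
            else 0))"
proof -
  note G0 = assms(1) and Gnz = assms(2) and g = assms(4)
  note rr = rho_rec[OF G0 Gnz g]
  have rho0: "rho G beta gamma 0 = 1" by (simp add: rho_def)
  define t where "t = (\<lambda>i. s i / beta)"
  define Fp where "Fp = (\<lambda>k n. if k \<le> n then gamma * hcs t (nat (n - k)) * rho G beta gamma (n - 1) else 0)"
  have Pp: "gamma ^ m * (\<Prod>j<m. G (of_int (int j) * beta)) = gamma * rho G beta gamma (int m - 1)" for m
  proof (induction m)
    case 0
    have "rho G beta gamma 0 = gamma * G (of_int 0 * beta) * rho G beta gamma (0 - 1)" by (rule rr)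
    thus ?case using rho0 G0 by simp
  next
    case (Suc m)
    have "gamma ^ Suc m * (\<Prod>j<Suc m. G (of_int (int j) * beta))
        = gamma * G (of_int (int m) * beta) * (gamma ^ m * (\<Prod>j<m. G (of_int (int j) * beta)))"
      by (simp only: power_Suc prod.lessThan_Suc mult_ac)
    also have "\<dots> = gamma * (gamma * G (of_int (int m) * beta) * rho G beta gamma (int m - 1))"
      unfolding Suc by (simp only: mult_ac)
    also have "\<dots> = gamma * rho G beta gamma (int m)" by (simp only: rr[of "int m", symmetric])
    finally show ?case by simp
  qed
  have plus: "fls_nth (Rpow G beta gamma 1 k (Psi0 G beta gamma s 1)) n = Fp k n" for n
  proof (rule Rpow_gen)
    fix n
    show "gamma * G (1 * beta * of_int n) \<noteq> 0" using g Gnz[of n] by (simp add: mult.commute)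
  next
    fix n
    show "fls_nth (Psi0 G beta gamma s 1) n = Fp 0 n"
    proof (cases "0 \<le> n")
      case True
      have "fls_nth (Psi0 G beta gamma s 1) n = gamma ^ nat n * (\<Prod>j<nat n. G (of_int (int j) * beta)) * hcs t (nat n)"
        using Psi0_plus_nth[of G beta gamma s n] True by (simp only: t_def if_True)
      also have "\<dots> = gamma * rho G beta gamma (int (nat n) - 1) * hcs t (nat n)" by (simp only: Pp)
      finally show ?thesis using True by (simp add: Fp_def)
    next
      case False thus ?thesis using Psi0_plus_nth[of G beta gamma s n] by (simp add: Fp_def)
    qed
  next
    fix k n
    show "Fp (k + 1) n = gamma * G (1 * beta * of_int (n - 1)) * Fp k (n - 1)"
    proof (cases "k + 1 \<le> n")
      case True
      have e: "nat (n - (k + 1)) = nat (n - 1 - k)" by simp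
      have "rho G beta gamma (n - 1) = gamma * G (of_int (n - 1) * beta) * rho G beta gamma (n - 1 - 1)" by (rule rr)
      thus ?thesis using True unfolding Fp_def e by (simp add: mult_ac)
    next
      case False thus ?thesis by (simp add: Fp_def)
    qed
  qed
  define Fm where "Fm = (\<lambda>k n. if k \<le> n then hcs (\<lambda>i. - t i) (nat (n - k)) * inverse (rho G beta gamma (- n)) else 0)"
  have Pm: "gamma ^ m * (\<Prod>i<m. G (of_int (- int i) * beta)) = inverse (rho G beta gamma (- int m))" for m
  proof (induction m)
    case 0 thus ?case using rho0 by simp
  next
    case (Suc m)
    have c: "gamma * G (of_int (- int m) * beta) \<noteq> 0" by (intro no_zero_divisors g Gnz)
    have r: "rho G beta gamma (- int m) = gamma * G (of_int (- int m) * beta) * rho G beta gamma (- int (Suc m))"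
    proof -
      have eq: "- int m - 1 = - int (Suc m)" by simp
      show ?thesis using rr[of "- int m"] unfolding eq .
    qed
    have "gamma ^ Suc m * (\<Prod>i<Suc m. G (of_int (- int i) * beta))
        = gamma * G (of_int (- int m) * beta) * (gamma ^ m * (\<Prod>i<m. G (of_int (- int i) * beta)))"
      by (simp only: power_Suc prod.lessThan_Suc mult_ac)
    also have "\<dots> = gamma * G (of_int (- int m) * beta) * inverse (rho G beta gamma (- int m))"
      unfolding Suc ..
    also have "\<dots> = inverse (rho G beta gamma (- int (Suc m)))"
      by (rule inverse_rec[OF c r, symmetric])
    finally show ?case .
  qed
  have minus: "fls_nth (Rpow G beta gamma (-1) k (Psi0 G beta gamma s (-1))) n = Fm k n" for n
  proof (rule Rpow_gen)
    fix n
    have "G ((-1) * beta * of_int n) = G (of_int (- n) * beta)" by (simp add: mult.commute)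
    thus "gamma * G ((-1) * beta * of_int n) \<noteq> 0" using g Gnz[of "- n"] by simp
  next
    fix n
    show "fls_nth (Psi0 G beta gamma s (-1)) n = Fm 0 n"
    proof (cases "0 \<le> n")
      case True
      have "fls_nth (Psi0 G beta gamma s (-1)) n = gamma ^ nat n * (\<Prod>i<nat n. G (of_int (- int i) * beta)) * hcs (\<lambda>i. - t i) (nat n)"
        using Psi0_minus_nth[of G beta gamma s n] True by (simp only: t_def if_True)
      also have "\<dots> = inverse (rho G beta gamma (- int (nat n))) * hcs (\<lambda>i. - t i) (nat n)" by (simp only: Pm)
      finally show ?thesis using True by (simp add: Fm_def)
    next
      case False thus ?thesis using Psi0_minus_nth[of G beta gamma s n] by (simp add: Fm_def)
    qed
  next
    fix k n
    show "Fm (k + 1) n = gamma * G ((-1) * beta * of_int (n - 1)) * Fm k (n - 1)"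
    proof (cases "k + 1 \<le> n")
      case True
      have e: "nat (n - (k + 1)) = nat (n - 1 - k)" by simp
      have ga: "G ((-1) * beta * of_int (n - 1)) = G (of_int (1 - n) * beta)" by (simp add: algebra_simps)
      have c: "gamma * G (of_int (1 - n) * beta) \<noteq> 0" by (intro no_zero_divisors g Gnz)
      have r: "rho G beta gamma (1 - n) = gamma * G (of_int (1 - n) * beta) * rho G beta gamma (- n)"
      proof -
        have eq: "1 - n - 1 = - n" by simp
        show ?thesis using rr[of "1 - n"] unfolding eq .
      qed
      have "inverse (rho G beta gamma (- n)) = gamma * G (of_int (1 - n) * beta) * inverse (rho G beta gamma (1 - n))"
        by (rule inverse_rec[OF c r])
      moreover have "- (n - 1) = 1 - n" by simp
      ultimately show ?thesis using True unfolding Fm_def e ga by (simp add: mult_ac)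
    next
      case False thus ?thesis by (simp add: Fm_def)
    qed
  qed
  show ?thesis
    using plus minus by (simp add: Fp_def Fm_def t_def)
qed

end
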